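(* Let $\mu$ be a nontrivial positive finite measure on $\partial\mathbb{D}$, let $n\ge1$, $1\le k\le n$, and let $z_1,\dots,z_k$ be zeros of $\Phi_n(z;\mu)$, repeated at most according to multiplicity (so $\prod_{j=1}^k(z-z_j)$ divides $\Phi_n(z;\mu)$). Then \[ \Phi_n(z;\mu)=\prod_{j=1}^k(z-z_j)\;\Phi_{n-k}\Bigl(z;\prod_{j=1}^k|z-z_j|^2\,d\mu\Bigr). \]
   Context: A measure on $\partial\mathbb{D}$ is nontrivial if its support is infinite. For a positive finite measure $\nu$ on $\partial\mathbb{D}$ with infinite support, $\Phi_n(z;\nu)$ is the unique monic polynomial of degree $n$ orthogonal in $L^2(\nu)$ to all polynomials of degree less than $n$; $\Phi_0=1$. In the formula, $\prod_{j}|z-z_j|^2d\mu$ denotes the measure with density $\prod_j|z-z_j|^2$ with respect to $\mu$. *)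

theory Defs
  imports "HOL-Analysis.Analysis" "HOL-Computational_Algebra.Polynomial"
begin

definition circle_measure :: "complex measure \<Rightarrow> bool" where
  "circle_measure \<nu> \<longleftrightarrow> sets \<nu> = sets borel \<and> finite_measure \<nu> \<and>
     emeasure \<nu> (UNIV - sphere 0 1) = 0"

definition measure_support :: "complex measure \<Rightarrow> complex set" where
  "measure_support \<nu> = {z. \<forall>e>0. emeasure \<nu> (ball z e) > 0}"

definition monic_OP :: "complex measure \<Rightarrow> nat \<Rightarrow> complex poly" where
  "monic_OP \<nu> n = (THE p. degree p = n \<and> lead_coeff p = 1 \<and>
     (\<forall>q::complex poly. degree q < n \<longrightarrow>
        (LINT z|\<nu>. poly p z * cnj (poly q z)) = 0))"

end

theory Submission
  imports Defs
begin


definition ipr :: "complex measure \<Rightarrow> complex poly \<Rightarrow> complex poly \<Rightarrow> complex" where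
  "ipr M p q = (LINT z|M. poly p z * cnj (poly q z))"

lemma cm_meas:
  assumes "circle_measure M" and "continuous_on UNIV f"
  shows "(f :: complex \<Rightarrow> 'b::{second_countable_topology,topological_space}) \<in> borel_measurable M"
proof -
  have "sets M = sets borel" using assms(1) unfolding circle_measure_def by auto
  then have "(f \<in> borel_measurable M) = (f \<in> borel_measurable borel)"
    using measurable_cong_sets[of M borel "borel::'b measure" "borel::'b measure"] by simp
  then show ?thesis using borel_measurable_continuous_onI[OF assms(2)] by simp
qed

lemma cm_AE_sphere:
  assumes "circle_measure M"
  shows "AE z in M. z \<in> sphere 0 1"
proof (rule AE_I')
  have s: "sets M = sets borel" using assms unfolding circle_measure_def by auto
  have "UNIV - sphere (0::complex) 1 \<in> sets borel" by auto
  then show "UNIV - sphere (0::complex) 1 \<in> null_sets M"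
    using assms s unfolding circle_measure_def by (auto simp: null_sets_def)
qed auto

lemma cm_integrable:
  assumes "circle_measure M"
  shows "integrable M (\<lambda>z. poly p z * cnj (poly q z))"
proof -
  have fm: "finite_measure M" using assms unfolding circle_measure_def by auto
  have c: "continuous_on UNIV (\<lambda>z. poly p z * cnj (poly q z))"
    by (intro continuous_intros)
  have "compact ((\<lambda>z. poly p z * cnj (poly q z)) ` sphere 0 1)"
    by (rule compact_continuous_image) (rule continuous_on_subset[OF c], simp_all)
  then have "bounded ((\<lambda>z. poly p z * cnj (poly q z)) ` sphere 0 1)"
    by (rule compact_imp_bounded)
  then obtain B where B0: "\<forall>x\<in>(\<lambda>z. poly p z * cnj (poly q z)) ` sphere 0 1. norm x \<le> B"
    unfolding bounded_iff by blast
  have B: "norm (poly p z * cnj (poly q z)) \<le> B" if "z \<in> sphere 0 1" for z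
    using B0 that by blast
  show ?thesis
    apply (rule finite_measure.integrable_const_bound[OF fm, of _ B])
    using cm_AE_sphere[OF assms] B apply (auto elim!: eventually_mono)[1]
    by (rule cm_meas[OF assms c])
qed

lemma ipr_add_left: "circle_measure M \<Longrightarrow> ipr M (p + q) r = ipr M p r + ipr M q r"
  unfolding ipr_def by (simp add: distrib_right cm_integrable)

lemma ipr_smult_left: "ipr M (smult c p) r = c * ipr M p r"
  unfolding ipr_def by (simp add: mult.assoc)

lemma ipr_conj: "ipr M q p = cnj (ipr M p q)"
proof -
  have h: "(\<lambda>z. poly q z * cnj (poly p z)) = (\<lambda>z. cnj (poly p z * cnj (poly q z)))" by auto
  show ?thesis unfolding ipr_def h using Bochner_Integration.integral_cnj[of M "\<lambda>z. poly p z * cnj (poly q z)"] by simp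
qed

lemma ipr_diff_left: "circle_measure M \<Longrightarrow> ipr M (p - q) r = ipr M p r - ipr M q r"
  unfolding ipr_def by (simp add: left_diff_distrib cm_integrable)

lemma ipr_add_right: "circle_measure M \<Longrightarrow> ipr M r (p + q) = ipr M r p + ipr M r q"
proof -
  assume M: "circle_measure M"
  have "ipr M r (p + q) = cnj (ipr M (p+q) r)" by (rule ipr_conj)
  also have "\<dots> = cnj (ipr M p r) + cnj (ipr M q r)" by (simp add: ipr_add_left[OF M])
  finally show ?thesis by (simp add: ipr_conj[of M r])
qed

lemma ipr_diff_right: "circle_measure M \<Longrightarrow> ipr M r (p - q) = ipr M r p - ipr M r q"
proof -
  assume M: "circle_measure M"
  have "ipr M r (p - q) = cnj (ipr M (p-q) r)" by (rule ipr_conj)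
  also have "\<dots> = cnj (ipr M p r) - cnj (ipr M q r)" by (simp add: ipr_diff_left[OF M])
  finally show ?thesis by (simp add: ipr_conj[of M r])
qed

lemma ipr_smult_right: "ipr M r (smult c p) = cnj c * ipr M r p"
proof -
  have "ipr M r (smult c p) = cnj (ipr M (smult c p) r)" by (rule ipr_conj)
  then show ?thesis by (simp add: ipr_smult_left ipr_conj[of M r])
qed

lemma ipr_sum_left: "circle_measure M \<Longrightarrow> ipr M (\<Sum>j\<in>A. f j) r = (\<Sum>j\<in>A. ipr M (f j) r)"
  by (induction A rule: infinite_finite_induct) (auto simp: ipr_add_left ipr_def[of M 0])

lemma ipr_zero:
  assumes M: "circle_measure M" and inf: "infinite (measure_support M)"
    and z: "ipr M p p = 0"
  shows "p = 0"
proof (rule ccontr)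
  assume p0: "p \<noteq> 0"
  have eq: "\<And>z. poly p z * cnj (poly p z) = complex_of_real ((cmod (poly p z))\<^sup>2)"
    by (simp add: complex_mult_cnj cmod_def)
  have int: "integrable M (\<lambda>z. (cmod (poly p z))\<^sup>2)"
  proof -
    have "integrable M (\<lambda>z. complex_of_real ((cmod (poly p z))\<^sup>2))"
      using cm_integrable[OF M, of p p] unfolding eq .
    then show ?thesis using complex_of_real_integrable_eq by blast
  qed
  have "(LINT z|M. (cmod (poly p z))\<^sup>2) = 0"
    using z unfolding ipr_def eq integral_complex_of_real by simp
  then have "AE z in M. (cmod (poly p z))\<^sup>2 = 0"
    using integral_nonneg_eq_0_iff_AE[OF int] by simp
  then have ae: "AE z in M. poly p z = 0" by simp
  have "measure_support M \<subseteq> {z. poly p z = 0}"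
  proof
    fix z assume zs: "z \<in> measure_support M"
    show "z \<in> {z. poly p z = 0}"
    proof (rule ccontr)
      assume "z \<notin> {z. poly p z = 0}"
      then have "poly p z \<noteq> 0" by simp
      have "open {w. poly p w \<noteq> 0}"
        by (intro open_Collect_neq continuous_intros)
      then obtain e where e: "e > 0" "ball z e \<subseteq> {w. poly p w \<noteq> 0}"
        using \<open>poly p z \<noteq> 0\<close> open_contains_ball by blast
      have pos: "emeasure M (ball z e) > 0" using zs e unfolding measure_support_def by auto
      have s: "sets M = sets borel" using M unfolding circle_measure_def by auto
      have "AE w in M. w \<notin> ball z e" using ae e(2) by (auto elim!: eventually_mono)
      moreover have "{x\<in>space M. \<not> (x \<notin> ball z e)} = ball z e"
        by (auto simp: sets_eq_imp_space_eq[OF s])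
      moreover have "ball z e \<in> sets M" using s by auto
      ultimately have "emeasure M (ball z e) = 0"
        using AE_iff_measurable[of "ball z e" M "\<lambda>w. w \<notin> ball z e"] by blast
      then show False using pos by simp
    qed
  qed
  moreover have "finite {z. poly p z = 0}" using poly_roots_finite[OF p0] .
  ultimately show False using inf finite_subset by blast
qed



lemma monic_diff:
  fixes p q :: "complex poly"
  assumes "degree p = m" "degree q = m" "lead_coeff p = 1" "lead_coeff q = 1" "p - q \<noteq> 0"
  shows "degree (p - q) < m"
proof -
  have le: "degree (p - q) \<le> m" using degree_diff_le[of p m q] assms by simp
  have "coeff (p - q) m = 0" using assms by simp
  then have "degree (p - q) \<noteq> m" using assms(5) leading_coeff_0_iff by metis
  then show ?thesis using le by simp
qed

lemma OP_unique:
  assumes M: "circle_measure M" and inf: "infinite (measure_support M)"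
    and p: "degree p = m" "lead_coeff p = 1" "\<forall>r. degree r < m \<longrightarrow> ipr M p r = 0"
    and q: "degree q = m" "lead_coeff q = 1" "\<forall>r. degree r < m \<longrightarrow> ipr M q r = 0"
  shows "p = q"
proof (rule ccontr)
  assume "p \<noteq> q"
  then have "p - q \<noteq> 0" by simp
  then have d: "degree (p - q) < m" using monic_diff p q by blast
  have "ipr M (p - q) (p - q) = 0" using d p q by (simp add: ipr_diff_left[OF M])
  then have "p - q = 0" using ipr_zero[OF M inf] by blast
  then show False using \<open>p - q \<noteq> 0\<close> by simp
qed

lemma OP_exists:
  assumes M: "circle_measure M" and inf: "infinite (measure_support M)"
  shows "\<exists>p. degree p = n \<and> lead_coeff p = 1 \<and> (\<forall>q. degree q < n \<longrightarrow> ipr M p q = 0)"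
proof (induction n rule: less_induct)
  case (less n)
  define f where "f m = (SOME p. degree p = m \<and> lead_coeff p = 1 \<and> (\<forall>q. degree q < m \<longrightarrow> ipr M p q = 0))" for m
  have f: "degree (f m) = m \<and> lead_coeff (f m) = 1 \<and> (\<forall>q. degree q < m \<longrightarrow> ipr M (f m) q = 0)"
    if "m < n" for m
    unfolding f_def by (rule someI_ex) (rule less[OF that])
  have orth: "ipr M (f i) (f j) = 0" if "i < n" "j < n" "i \<noteq> j" for i j
  proof (cases "j < i")
    case True
    then show ?thesis using f[OF that(1)] f[OF that(2)] by auto
  next
    case False
    then have "i < j" using that by simp
    then have "ipr M (f j) (f i) = 0" using f[OF that(1)] f[OF that(2)] by auto
    then show ?thesis by (metis ipr_conj complex_cnj_zero)
  qed
  have pos: "ipr M (f m) (f m) \<noteq> 0" if "m < n" for m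
  proof
    assume "ipr M (f m) (f m) = 0"
    then have "f m = 0" using ipr_zero[OF M inf] by blast
    then show False using f[OF that] by simp
  qed
  define c where "c j = ipr M (monom 1 n) (f j) / ipr M (f j) (f j)" for j
  define p where "p = monom 1 n - (\<Sum>j<n. smult (c j) (f j))"
  have cs: "coeff (\<Sum>j<n. smult (c j) (f j)) i = 0" if "n \<le> i" for i
    unfolding coeff_sum using f that by (auto intro!: sum.neutral coeff_eq_0)
  have cp: "coeff p i = (if i = n then 1 else 0)" if "n \<le> i" for i
    unfolding p_def using cs[OF that] by (simp add: coeff_monom)
  have dp: "degree p = n"
  proof (rule antisym)
    show "degree p \<le> n" using cp by (intro degree_le) auto
    show "n \<le> degree p" using cp[of n] by (intro le_degree) auto
  qed
  have lp: "lead_coeff p = 1" using dp cp[of n] by simp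
  have of: "ipr M p (f i) = 0" if "i < n" for i
  proof -
    have "ipr M p (f i) = ipr M (monom 1 n) (f i) - (\<Sum>j<n. c j * ipr M (f j) (f i))"
      unfolding p_def by (simp add: ipr_diff_left[OF M] ipr_sum_left[OF M] ipr_smult_left)
    also have "(\<Sum>j<n. c j * ipr M (f j) (f i)) = (\<Sum>j<n. if j = i then c i * ipr M (f i) (f i) else 0)"
      using orth that by (intro sum.cong) auto
    also have "\<dots> = c i * ipr M (f i) (f i)" using that by simp
    also have "c i * ipr M (f i) (f i) = ipr M (monom 1 n) (f i)"
      unfolding c_def using pos[OF that] by simp
    finally show ?thesis by simp
  qed
  have "\<forall>q. degree q \<le> d \<longrightarrow> d < n \<longrightarrow> ipr M p q = 0" for d
  proof (induction d)
    case 0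
    show ?case
    proof (intro allI impI)
      fix q :: "complex poly" assume "degree q \<le> 0" "0 < n"
      then have q: "q = smult (coeff q 0) (f 0)"
        using f[of 0] degree_0_id[of q] degree_0_id[of "f 0"] by (metis le_zero_eq smult_pCons mult.right_neutral smult_0_right)
      show "ipr M p q = 0" by (subst q) (simp add: ipr_smult_right of[OF \<open>0 < n\<close>])
    qed
  next
    case (Suc d)
    show ?case
    proof (intro allI impI)
      fix q :: "complex poly" assume q: "degree q \<le> Suc d" "Suc d < n"
      define r where "r = q - smult (coeff q (Suc d)) (f (Suc d))"
      have cf: "coeff (f (Suc d)) (Suc d) = 1" using f[OF q(2)] by metis
      have "degree r \<le> Suc d" unfolding r_def using q f[OF q(2)]
        by (intro degree_diff_le) auto
      moreover have "coeff r (Suc d) = 0" unfolding r_def using cf by simp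
      ultimately have "degree r \<le> d"
      proof -
        assume a: "degree r \<le> Suc d" "coeff r (Suc d) = 0"
        show "degree r \<le> d"
        proof (rule ccontr)
          assume "\<not> degree r \<le> d"
          then have "degree r = Suc d" using a by simp
          then have "r = 0" using a leading_coeff_0_iff by metis
          then show False using \<open>degree r = Suc d\<close> by simp
        qed
      qed
      then have h1: "ipr M p r = 0" using Suc q by auto
      obtain c0 where "c0 = coeff q (Suc d)" by blast
      then have h2: "q = r + smult c0 (f (Suc d))" unfolding r_def by simp
      show "ipr M p q = 0" unfolding h2
        using h1 ipr_add_right[OF M, of p r] ipr_smult_right[of M p] of[OF q(2)] by simp
    qed
  qed
  then have "\<forall>q. degree q < n \<longrightarrow> ipr M p q = 0" by blast
  then show ?case using dp lp by blast
qed

lemma monic_OP_char: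
  assumes M: "circle_measure M" and inf: "infinite (measure_support M)"
  shows "degree (monic_OP M n) = n \<and> lead_coeff (monic_OP M n) = 1 \<and>
     (\<forall>q. degree q < n \<longrightarrow> ipr M (monic_OP M n) q = 0)"
proof -
  obtain p where p: "degree p = n" "lead_coeff p = 1" "\<forall>q. degree q < n \<longrightarrow> ipr M p q = 0"
    using OP_exists[OF M inf] by blast
  have "monic_OP M n = p"
    unfolding monic_OP_def
  proof (rule the_equality)
    show "degree p = n \<and> lead_coeff p = 1 \<and> (\<forall>q. degree q < n \<longrightarrow> (CLINT z|M. poly p z * cnj (poly q z)) = 0)"
      using p unfolding ipr_def by blast
    fix p' assume "degree p' = n \<and> lead_coeff p' = 1 \<and> (\<forall>q. degree q < n \<longrightarrow> (CLINT z|M. poly p' z * cnj (poly q z)) = 0)"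
    then show "p' = p" using OP_unique[OF M inf _ _ _ p] unfolding ipr_def by blast
  qed
  then show ?thesis using p by simp
qed



lemma dens_ipr:
  assumes M: "circle_measure M"
  shows "(LINT z|density M (\<lambda>z. ennreal (\<Prod>j<k. (cmod (z - zs j))\<^sup>2)). poly p z * cnj (poly q z))
     = ipr M ((\<Prod>j<k. [:- zs j, 1:]) * p) ((\<Prod>j<k. [:- zs j, 1:]) * q)"
proof -
  let ?P = "\<Prod>j<k. [:- zs j, 1:]"
  have g: "(\<Prod>j<k. (cmod (z - zs j))\<^sup>2) = (cmod (poly ?P z))\<^sup>2" for z
  proof -
    have "poly ?P z = (\<Prod>j<k. z - zs j)" unfolding poly_prod by simp
    then have "(cmod (poly ?P z))\<^sup>2 = (\<Prod>j<k. cmod (z - zs j))\<^sup>2" by (simp only: prod_norm)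
    then show ?thesis by (simp only: prod_power_distrib)
  qed
  have pw: "(\<Prod>j<k. (cmod (z - zs j))\<^sup>2) *\<^sub>R (poly p z * cnj (poly q z)) =
     poly (?P * p) z * cnj (poly (?P * q) z)" for z
  proof -
    have "complex_of_real ((cmod (poly ?P z))\<^sup>2) = poly ?P z * cnj (poly ?P z)"
      by (simp add: complex_mult_cnj cmod_def)
    then show ?thesis unfolding g scaleR_conv_of_real poly_mult complex_cnj_mult
      by (simp only: mult_ac)
  qed
  have "(LINT z|density M (\<lambda>z. ennreal (\<Prod>j<k. (cmod (z - zs j))\<^sup>2)). poly p z * cnj (poly q z))
    = (LINT z|M. (\<Prod>j<k. (cmod (z - zs j))\<^sup>2) *\<^sub>R (poly p z * cnj (poly q z)))"
    by (rule integral_density) (auto intro!: cm_meas[OF M] continuous_intros AE_I2 prod_nonneg)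
  also have "\<dots> = ipr M (?P * p) (?P * q)" unfolding pw ipr_def ..
  finally show ?thesis .
qed

theorem theorem3:
  fixes \<mu> :: "complex measure" and n k :: nat and zs :: "nat \<Rightarrow> complex"
  assumes "circle_measure \<mu>"
    and "infinite (measure_support \<mu>)"
    and "1 \<le> n" and "1 \<le> k" and "k \<le> n"
    and "(\<Prod>j<k. [:- zs j, 1:]) dvd monic_OP \<mu> n"
  shows "monic_OP \<mu> n =
    (\<Prod>j<k. [:- zs j, 1:]) *
      monic_OP (density \<mu> (\<lambda>z. ennreal (\<Prod>j<k. (cmod (z - zs j))\<^sup>2))) (n - k)"
proof -
  note M = assms(1) and inf = assms(2)
  define P where "P = (\<Prod>j<k. [:- zs j, 1:])"
  define \<nu> where "\<nu> = density \<mu> (\<lambda>z. ennreal (\<Prod>j<k. (cmod (z - zs j))\<^sup>2))"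
  have Phi: "degree (monic_OP \<mu> n) = n" "lead_coeff (monic_OP \<mu> n) = 1"
     "\<forall>q. degree q < n \<longrightarrow> ipr \<mu> (monic_OP \<mu> n) q = 0"
    using monic_OP_char[OF M inf, of n] by blast+
  obtain Q where Q: "monic_OP \<mu> n = P * Q" using assms(6) unfolding P_def by blast
  have dP: "degree P = k" unfolding P_def by (subst degree_prod_sum_eq) auto
  have lP: "lead_coeff P = 1" unfolding P_def by (simp add: lead_coeff_prod)
  have P0: "P \<noteq> 0" using lP by auto
  have Q0: "Q \<noteq> 0" using Q Phi(2) by auto
  have dQ: "degree Q = n - k" using Phi(1) Q degree_mult_eq[OF P0 Q0] dP by simp
  have lQ: "lead_coeff Q = 1" using Phi(2) Q lP by (simp add: lead_coeff_mult)
  have dens: "(LINT z|\<nu>. poly p z * cnj (poly q z)) = ipr \<mu> (P * p) (P * q)" for p q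
    unfolding \<nu>_def P_def by (rule dens_ipr[OF M])
  have Qorth: "ipr \<mu> (P * Q) (P * q) = 0" if "degree q < n - k" for q
  proof (cases "q = 0")
    case True then show ?thesis using Phi(3) Q assms(3) by auto
  next
    case False
    then have "degree (P * q) < n" using degree_mult_eq[OF P0 False] dP that assms(5) by simp
    then show ?thesis using Phi(3) Q by auto
  qed
  have "monic_OP \<nu> (n - k) = Q"
    unfolding monic_OP_def
  proof (rule the_equality)
    show "degree Q = n - k \<and> lead_coeff Q = 1 \<and> (\<forall>q. degree q < n - k \<longrightarrow> (CLINT z|\<nu>. poly Q z * cnj (poly q z)) = 0)"
      using dQ lQ Qorth dens by auto
    fix p' assume h: "degree p' = n - k \<and> lead_coeff p' = 1 \<and> (\<forall>q. degree q < n - k \<longrightarrow> (CLINT z|\<nu>. poly p' z * cnj (poly q z)) = 0)"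
    show "p' = Q"
    proof (rule ccontr)
      assume "p' \<noteq> Q"
      then have D0: "p' - Q \<noteq> 0" by simp
      then have d: "degree (p' - Q) < n - k" using monic_diff h dQ lQ by blast
      have "ipr \<mu> (P * (p' - Q)) (P * (p' - Q)) = ipr \<mu> (P * p') (P * (p' - Q)) - ipr \<mu> (P * Q) (P * (p' - Q))"
        by (simp add: right_diff_distrib ipr_diff_left[OF M] del: mult_diff_mult)
      also have "\<dots> = 0" using h d dens Qorth by auto
      finally have "P * (p' - Q) = 0" using ipr_zero[OF M inf] by blast
      then show False using P0 D0 by simp
    qed
  qed
  then show ?thesis using Q unfolding P_def \<nu>_def by simp
qed

end
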